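(* Let $p$ be a prime, $\varepsilon>0$, $0<\alpha\le1$, and let $N=p^{1/12-\varepsilon}$ (a positive integer). If $S$ is chosen from $\mathcal{S}(N,12)$, then with probability at least $1-6p^{-12\varepsilon}$, $$\mathcal{C}_\alpha(S)>\left(\alpha|S|/\sqrt[3]{4}\right)^{3/5}.$$
   Context: $\mathcal{S}(N,k)$ denotes the random subset $S=\{x_1,\dots,x_N\}\subseteq\mathbb{Z}_p$, where $x_1,\dots,x_N$ are $k$-wise independent random variables each uniformly distributed on $\mathbb{Z}_p$. For $L\subseteq\mathbb{Z}_p^2$, $I(L)=\{x\in\mathbb{Z}_p\mid \exists (a,b),(a',b')\in L,\ (a,b)\neq(a',b'),\ ax+b=a'x+b'\}$. For $S\subseteq\mathbb{Z}_p$ and $0<\alpha\leq1$, the generic $\alpha$-complexity $\mathcal{C}_\alpha(S)$ is the smallest cardinality of a set $L\subseteq\mathbb{Z}_p^2$ with $|S\cap I(L)|\geq\alpha|S|$. *)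

theory Defs
  imports "HOL-Probability.Probability"
begin

text \<open>Elements of Z_p are represented by naturals in {0..<p}; points of Z_p^2 by pairs.\<close>

definition I_lines :: "nat \<Rightarrow> (nat \<times> nat) set \<Rightarrow> nat set" where
  "I_lines p L = {x \<in> {0..<p}. \<exists>(a,b)\<in>L. \<exists>(a',b')\<in>L.
      (a,b) \<noteq> (a',b') \<and> (a*x+b) mod p = (a'*x+b') mod p}"

definition gen_complexity :: "nat \<Rightarrow> real \<Rightarrow> nat set \<Rightarrow> nat" where
  "gen_complexity p \<alpha> S = (LEAST n. \<exists>L. L \<subseteq> {0..<p} \<times> {0..<p} \<and> card L = n \<and>
      real (card (S \<inter> I_lines p L)) \<ge> \<alpha> * real (card S))"

text \<open>k-wise independent uniform random variables x_0..x_{N-1} on Z_p, given as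
  a joint distribution D on sequences (coordinate i is x_i).\<close>
definition kwise_uniform :: "nat \<Rightarrow> nat \<Rightarrow> nat \<Rightarrow> (nat \<Rightarrow> nat) pmf \<Rightarrow> bool" where
  "kwise_uniform p N k D \<longleftrightarrow>
     (\<forall>i<N. map_pmf (\<lambda>\<omega>. \<omega> i) D = pmf_of_set {0..<p}) \<and>
     (\<forall>J. J \<subseteq> {0..<N} \<and> card J \<le> k \<longrightarrow>
        prob_space.indep_vars (measure_pmf D) (\<lambda>_. count_space UNIV) (\<lambda>i \<omega>. \<omega> i) J)"

end

theory Submission
  imports Defs
begin

definition det3 :: "(nat \<Rightarrow> int) \<Rightarrow> (nat \<Rightarrow> int) \<Rightarrow> (nat \<Rightarrow> int) \<Rightarrow> nat \<Rightarrow> nat \<Rightarrow> nat \<Rightarrow> int" where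
 "det3 a b c i j k = a i * (b j * c k - b k * c j) - a j * (b i * c k - b k * c i) + a k * (b i * c j - b j * c i)"

definition det4 :: "(nat \<Rightarrow> int) \<Rightarrow> (nat \<Rightarrow> int) \<Rightarrow> (nat \<Rightarrow> int) \<Rightarrow> (nat \<Rightarrow> int) \<Rightarrow> int" where
 "det4 r0 r1 r2 r3 = r0 0 * det3 r1 r2 r3 1 2 3 - r0 1 * det3 r1 r2 r3 0 2 3
    + r0 2 * det3 r1 r2 r3 0 1 3 - r0 3 * det3 r1 r2 r3 0 1 2"

definition lin :: "int \<Rightarrow> (nat \<Rightarrow> int) \<Rightarrow> (nat \<Rightarrow> int) \<Rightarrow> nat \<Rightarrow> int" where
 "lin z e f = (\<lambda>k. z * e k + f k)"

lemma det4_lin0: "det4 (lin z e f) r1 r2 r3 = z * det4 e r1 r2 r3 + det4 f r1 r2 r3"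
  unfolding det4_def det3_def lin_def by (simp add: algebra_simps)
lemma det4_lin1: "det4 r0 (lin z e f) r2 r3 = z * det4 r0 e r2 r3 + det4 r0 f r2 r3"
  unfolding det4_def det3_def lin_def by (simp add: algebra_simps)
lemma det4_lin2: "det4 r0 r1 (lin z e f) r3 = z * det4 r0 r1 e r3 + det4 r0 r1 f r3"
  unfolding det4_def det3_def lin_def by (simp add: algebra_simps)
lemma det4_lin3: "det4 r0 r1 r2 (lin z e f) = z * det4 r0 r1 r2 e + det4 r0 r1 r2 f"
  unfolding det4_def det3_def lin_def by (simp add: algebra_simps)

definition cr :: "nat \<Rightarrow> int \<Rightarrow> (nat \<Rightarrow> int) \<Rightarrow> nat \<Rightarrow> int" where
 "cr i v r = (\<lambda>k. if k = i then v else r k)"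

definition dotw :: "(nat \<Rightarrow> int) \<Rightarrow> (nat \<Rightarrow> int) \<Rightarrow> int" where
 "dotw r w = r 0 * w 0 + r 1 * w 1 + r 2 * w 2 + r 3 * w 3"

lemma det4_cramer0: "det4 (cr 0 (dotw r0 w) r0) (cr 0 (dotw r1 w) r1) (cr 0 (dotw r2 w) r2) (cr 0 (dotw r3 w) r3)
   = w 0 * det4 r0 r1 r2 r3"
  unfolding det4_def det3_def cr_def dotw_def by (simp add: algebra_simps)
lemma det4_cramer1: "det4 (cr 1 (dotw r0 w) r0) (cr 1 (dotw r1 w) r1) (cr 1 (dotw r2 w) r2) (cr 1 (dotw r3 w) r3)
   = w 1 * det4 r0 r1 r2 r3"
  unfolding det4_def det3_def cr_def dotw_def by (simp add: algebra_simps)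

lemma det4_cr_mult: "det4 (cr i (m * v0) r0) (cr i (m * v1) r1) (cr i (m * v2) r2) (cr i (m * v3) r3)
   = m * det4 (cr i v0 r0) (cr i v1 r1) (cr i v2 r2) (cr i v3 r3)" if "i < 4"
  using that unfolding det4_def det3_def cr_def
  by (auto simp: algebra_simps less_Suc_eq numeral_eq_Suc)

definition Ev :: "int \<Rightarrow> int \<Rightarrow> nat \<Rightarrow> int" where
 "Ev s t = (\<lambda>k. if k = 0 then -s else if k = 1 then -1 else if k = 2 then t else 1)"
definition Fv :: "int \<Rightarrow> int \<Rightarrow> nat \<Rightarrow> int" where
 "Fv s t = (\<lambda>k. if k = 0 then s * t else if k = 1 then t else if k = 2 then (- (t * s)) else (- s))"
definition rowR :: "int \<Rightarrow> int \<Rightarrow> int \<Rightarrow> nat \<Rightarrow> int" where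
 "rowR s t z = lin z (Ev s t) (Fv s t)"

lemma det4_EEEE: "det4 (Ev s1 t1) (Ev s2 t2) (Ev s3 t3) (Ev s4 t4) = 0"
  unfolding det4_def det3_def Ev_def by (simp add: algebra_simps)

lemma det4_FEEE: "det4 (Fv s1 t1) (Ev s2 t2) (Ev s3 t3) (Ev s4 t4) =
   (s1 - t1) * (t4 * (s2 - s3) + (s4 * t3 - s2 * t3 + t2 * s3 - t2 * s4))"
  unfolding det4_def det3_def Ev_def Fv_def by (simp add: algebra_simps)

lemma dotw_rowR: "dotw (rowR s t z) w = (t - z) * (w 0 * s + w 1) - (s - z) * (w 2 * t + w 3)"
  unfolding dotw_def rowR_def lin_def Ev_def Fv_def by (simp add: algebra_simps)

lemma row_dvd:
  fixes p :: int
  assumes "p dvd (A1 * s+B1 - (C * s+D))" "p dvd (A2 * t+B2 - (C * t+D))" "p dvd (A3 * z+B3 - (C * z+D))"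
  shows "p dvd dotw (rowR s t z) (\<lambda>k. if k = 0 then A1-A3 else if k = 1 then B1-B3 else if k = 2 then A2-A3 else B2-B3)"
proof -
  have "dotw (rowR s t z) (\<lambda>k. if k = 0 then A1-A3 else if k = 1 then B1-B3 else if k = 2 then A2-A3 else B2-B3)
     = (t - z) * (A1 * s+B1 - (C * s+D)) - (s - z) * (A2 * t+B2 - (C * t+D)) - (t - s) * (A3 * z+B3 - (C * z+D))"
    unfolding dotw_rowR by (simp add: algebra_simps)
  then show ?thesis using assms by simp
qed

lemma det4_col_dvd:
  fixes p :: int
  assumes "i < 4" "p dvd r0 i" "p dvd r1 i" "p dvd r2 i" "p dvd r3 i"
  shows "p dvd det4 r0 r1 r2 r3"
proof -
  obtain q0 q1 q2 q3 where q: "r0 i = p * q0" "r1 i = p * q1" "r2 i = p * q2" "r3 i = p * q3"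
    using assms by (meson dvdE)
  have e: "r = cr i (r i) r" for r :: "nat \<Rightarrow> int" by (auto simp: cr_def)
  have "det4 r0 r1 r2 r3 = det4 (cr i (p * q0) r0) (cr i (p * q1) r1) (cr i (p * q2) r2) (cr i (p * q3) r3)"
    using e[of r0] e[of r1] e[of r2] e[of r3] q by metis
  also have "\<dots> = p * det4 (cr i q0 r0) (cr i q1 r1) (cr i q2 r2) (cr i q3 r3)"
    by (rule det4_cr_mult) fact
  finally show ?thesis by simp
qed

lemma det4_dvd_from_kernel:
  fixes p :: int
  assumes "prime p" "\<not> (p dvd w 0 \<and> p dvd w 1)"
    "p dvd dotw r0 w" "p dvd dotw r1 w" "p dvd dotw r2 w" "p dvd dotw r3 w"
  shows "p dvd det4 r0 r1 r2 r3"
proof -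
  have "p dvd det4 (cr 0 (dotw r0 w) r0) (cr 0 (dotw r1 w) r1) (cr 0 (dotw r2 w) r2) (cr 0 (dotw r3 w) r3)"
    by (rule det4_col_dvd[of 0]) (use assms in \<open>auto simp: cr_def\<close>)
  then have a: "p dvd w 0 * det4 r0 r1 r2 r3" by (simp add: det4_cramer0)
  have "p dvd det4 (cr 1 (dotw r0 w) r0) (cr 1 (dotw r1 w) r1) (cr 1 (dotw r2 w) r2) (cr 1 (dotw r3 w) r3)"
    by (rule det4_col_dvd[of 1]) (use assms in \<open>auto simp: cr_def\<close>)
  then have b: "p dvd w 1 * det4 r0 r1 r2 r3" by (metis det4_cramer1)
  show ?thesis using a b assms(1,2) by (meson prime_dvd_mult_iff)
qed

definition RR :: "(nat \<Rightarrow> nat) \<Rightarrow> nat \<Rightarrow> nat \<Rightarrow> int" where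
 "RR y j = rowR (int (y j)) (int (y (j+4))) (int (y (j+8)))"
definition EE :: "(nat \<Rightarrow> nat) \<Rightarrow> nat \<Rightarrow> nat \<Rightarrow> int" where
 "EE y j = Ev (int (y j)) (int (y (j+4)))"
definition FF :: "(nat \<Rightarrow> nat) \<Rightarrow> nat \<Rightarrow> nat \<Rightarrow> int" where
 "FF y j = Fv (int (y j)) (int (y (j+4)))"

definition bad :: "nat \<Rightarrow> (nat \<Rightarrow> nat) \<Rightarrow> bool" where
 "bad p y \<longleftrightarrow> y 4 \<noteq> y 0 \<and> y 1 \<noteq> y 2 \<and> int p dvd det4 (RR y 0) (RR y 1) (RR y 2) (RR y 3)"

lemma small_dvd_eq:
  assumes "a < p" "b < p" "int p dvd (int a - int b)"
  shows "a = b"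
proof (rule ccontr)
  assume "a \<noteq> b"
  then have "int a - int b \<noteq> 0" by simp
  then have "\<bar>int p\<bar> \<le> \<bar>int a - int b\<bar>" using assms(3) by (rule dvd_imp_le_int)
  then show False using assms(1,2) by linarith
qed

lemma gen_count:
  fixes G H :: "(nat \<Rightarrow> nat) \<Rightarrow> int"
  assumes p: "prime p" and c: "c < 12"
    and indep: "\<And>y v. G (y(c := v)) = G y" "\<And>y v. H (y(c := v)) = H y"
  shows "card {y \<in> PiE {0..<12} (\<lambda>_. {0..<p}). \<not> int p dvd G y \<and> int p dvd (int (y c) * G y + H y)} \<le> p ^ 11"
proof -
  let ?A = "{y \<in> PiE {0..<12} (\<lambda>_. {0..<p}). \<not> int p dvd G y \<and> int p dvd (int (y c) * G y + H y)}"
  let ?f = "\<lambda>y. y(c := undefined)"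
  have pp: "prime (int p)" using p by simp
  have inj: "inj_on ?f ?A"
  proof (rule inj_onI)
    fix y y' assume y: "y \<in> ?A" and y': "y' \<in> ?A" and eq: "?f y = ?f y'"
    have yy: "y' = y(c := y' c)"
      using eq by (metis fun_upd_triv fun_upd_upd)
    have G: "G y' = G y" and H: "H y' = H y" using yy indep by metis+
    have "int p dvd (int (y c) * G y + H y) - (int (y' c) * G y + H y)"
      using y y' G H by (intro dvd_diff) auto
    then have "int p dvd (int (y c) - int (y' c)) * G y" by (simp add: algebra_simps)
    then have d: "int p dvd (int (y c) - int (y' c))"
      using y pp by (auto simp: prime_dvd_mult_iff)
    have "y c < p" "y' c < p" using y y' c by (auto simp: PiE_def Pi_def)
    then have "y c = y' c" using d small_dvd_eq by blast
    then show "y = y'" using yy by (metis fun_upd_triv)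
  qed
  have sub: "?f ` ?A \<subseteq> PiE ({0..<12} - {c}) (\<lambda>_. {0..<p})"
    by (auto simp: PiE_def Pi_def extensional_def)
  have "card ?A = card (?f ` ?A)" using inj by (simp add: card_image)
  also have "\<dots> \<le> card (PiE ({0..<12} - {c}) (\<lambda>_. {0..<p}))"
    by (rule card_mono[OF _ sub]) (simp add: finite_PiE)
  also have "\<dots> = p ^ 11" using c by (simp add: card_PiE)
  finally show ?thesis .
qed

definition "G1 y = det4 (RR y 0) (RR y 1) (RR y 2) (EE y 3)"
definition "H1 y = det4 (RR y 0) (RR y 1) (RR y 2) (FF y 3)"
definition "G2 y = det4 (RR y 0) (RR y 1) (EE y 2) (EE y 3)"
definition "H2 y = det4 (RR y 0) (RR y 1) (FF y 2) (EE y 3)"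
definition "G3 y = det4 (RR y 0) (EE y 1) (EE y 2) (EE y 3)"
definition "H3 y = det4 (RR y 0) (FF y 1) (EE y 2) (EE y 3)"
definition "G4 y = int (y 1) - int (y 2)"
definition "H4 y = int (y 3) * int (y 6) - int (y 1) * int (y 6) + int (y 5) * int (y 2) - int (y 5) * int (y 3)"

lemma RR_lin: "RR y j = lin (int (y (j+8))) (EE y j) (FF y j)"
  unfolding RR_def EE_def FF_def rowR_def by simp

lemma dec1: "det4 (RR y 0) (RR y 1) (RR y 2) (RR y 3) = int (y 11) * G1 y + H1 y"
  unfolding G1_def H1_def RR_lin[of y 3] det4_lin3 by simp
lemma dec2: "G1 y = int (y 10) * G2 y + H2 y"
  unfolding G1_def G2_def H2_def RR_lin[of y 2] det4_lin2 by simp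
lemma dec3: "G2 y = int (y 9) * G3 y + H3 y"
  unfolding G3_def G2_def H3_def RR_lin[of y 1] det4_lin1 by simp
lemma dec4: "G3 y = (int (y 0) - int (y 4)) * (int (y 7) * G4 y + H4 y)"
  unfolding G3_def G4_def H4_def RR_lin[of y 0] det4_lin0 EE_def FF_def det4_EEEE det4_FEEE
  by (simp add: algebra_simps)

lemma indeps:
  "G1 (y(11 := v)) = G1 y" "H1 (y(11 := v)) = H1 y"
  "G2 (y(10 := v)) = G2 y" "H2 (y(10 := v)) = H2 y"
  "G3 (y(9 := v)) = G3 y" "H3 (y(9 := v)) = H3 y"
  "G4 (y(7 := v)) = G4 y" "H4 (y(7 := v)) = H4 y"
  by (simp_all add: G1_def H1_def G2_def H2_def G3_def H3_def G4_def H4_def RR_def EE_def FF_def)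

lemma bad_count:
  assumes p: "prime p"
  shows "card {y \<in> PiE {0..<12} (\<lambda>_. {0..<p}). bad p y} \<le> 4 * p ^ 11"
proof -
  let ?P = "PiE {0..<12} (\<lambda>_. {0..<p})"
  define C where "C c G H = {y \<in> ?P. \<not> int p dvd G y \<and> int p dvd (int (y c) * G y + H y)}"
    for c and G H :: "(nat \<Rightarrow> nat) \<Rightarrow> int"
  have pp: "prime (int p)" using p by simp
  have fin: "finite (C c G H)" for c G H unfolding C_def by (simp add: finite_PiE)
  have sub: "{y \<in> ?P. bad p y} \<subseteq> C 11 G1 H1 \<union> C 10 G2 H2 \<union> C 9 G3 H3 \<union> C 7 G4 H4"
  proof
    fix y assume y: "y \<in> {y \<in> ?P. bad p y}"
    then have yP: "y \<in> ?P" and b: "bad p y" by auto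
    have lt: "y i < p" if "i < 12" for i using yP that by (auto simp: PiE_def Pi_def)
    have d0: "int p dvd int (y 11) * G1 y + H1 y" using b dec1 by (simp add: bad_def)
    show "y \<in> C 11 G1 H1 \<union> C 10 G2 H2 \<union> C 9 G3 H3 \<union> C 7 G4 H4"
    proof (cases "int p dvd G1 y")
      case False then show ?thesis using d0 yP by (simp add: C_def)
    next
      case d1: True
      then have d1': "int p dvd int (y 10) * G2 y + H2 y" by (simp add: dec2)
      show ?thesis
      proof (cases "int p dvd G2 y")
        case False then show ?thesis using d1' yP by (simp add: C_def)
      next
        case d2: True
        then have d2': "int p dvd int (y 9) * G3 y + H3 y" by (simp add: dec3)
        show ?thesis
        proof (cases "int p dvd G3 y")
          case False then show ?thesis using d2' yP by (simp add: C_def)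
        next
          case d3: True
          have n04: "\<not> int p dvd (int (y 0) - int (y 4))"
            using small_dvd_eq[of "y 0" p "y 4"] lt[of 0] lt[of 4] b by (auto simp: bad_def)
          have n12: "\<not> int p dvd G4 y"
            using small_dvd_eq[of "y 1" p "y 2"] lt[of 1] lt[of 2] b by (auto simp: bad_def G4_def)
          have "int p dvd int (y 7) * G4 y + H4 y"
            using d3 n04 pp by (simp add: dec4 prime_dvd_mult_iff)
          then show ?thesis using n12 yP by (simp add: C_def)
        qed
      qed
    qed
  qed
  have c: "card (C c G H) \<le> p ^ 11" if "c < 12" "\<And>y v. G (y(c := v)) = G y" "\<And>y v. H (y(c := v)) = H y" for c G H
    unfolding C_def by (rule gen_count[OF p that])
  have "card {y \<in> ?P. bad p y} \<le> card (C 11 G1 H1 \<union> C 10 G2 H2 \<union> C 9 G3 H3 \<union> C 7 G4 H4)"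
    by (rule card_mono[OF _ sub]) (simp add: fin)
  also have "\<dots> \<le> card (C 11 G1 H1) + card (C 10 G2 H2) + card (C 9 G3 H3) + card (C 7 G4 H4)"
    using card_Un_le[of "C 11 G1 H1 \<union> C 10 G2 H2 \<union> C 9 G3 H3" "C 7 G4 H4"]
      card_Un_le[of "C 11 G1 H1 \<union> C 10 G2 H2" "C 9 G3 H3"] card_Un_le[of "C 11 G1 H1" "C 10 G2 H2"]
    by linarith
  also have "\<dots> \<le> p^11 + p^11 + p^11 + p^11"
    by (intro add_mono c) (simp_all add: indeps)
  finally show ?thesis by simp
qed

lemma prob_single_le:
  assumes ku: "kwise_uniform p N 12 D" and j: "j < N" and p: "p > 0"
  shows "measure_pmf.prob D {\<omega>. \<omega> j = c} \<le> 1 / real p"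
proof -
  have "measure_pmf.prob D {\<omega>. \<omega> j = c} = measure_pmf.prob (map_pmf (\<lambda>\<omega>. \<omega> j) D) {c}"
    by (simp add: vimage_def)
  also have "\<dots> = pmf (pmf_of_set {0..<p}) c"
    using ku j unfolding kwise_uniform_def by (simp add: measure_pmf_single)
  also have "\<dots> \<le> 1 / real p" using p by (simp add: indicator_def)
  finally show ?thesis .
qed

lemma set_pmf_lt:
  assumes ku: "kwise_uniform p N 12 D" and j: "j < N" and p: "p > 0" and w: "\<omega> \<in> set_pmf D"
  shows "\<omega> j < p"
proof -
  have "\<omega> j \<in> set_pmf (map_pmf (\<lambda>\<omega>. \<omega> j) D)" using w by simp
  also have "map_pmf (\<lambda>\<omega>. \<omega> j) D = pmf_of_set {0..<p}"
    using ku j unfolding kwise_uniform_def by simp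
  finally show ?thesis using p by simp
qed

lemma pmf_joint_le:
  assumes ku: "kwise_uniform p N 12 D" and p: "p > 0"
    and k: "(k :: nat \<Rightarrow> nat) \<in> PiE {0..<12} (\<lambda>_. {0..<N})" "inj_on k {0..<12}"
  shows "pmf (map_pmf (\<lambda>\<omega>. restrict (\<lambda>i. \<omega> (k i)) {0..<12}) D) y \<le> 1 / real p ^ 12"
proof -
  let ?J = "k ` {0..<12}"
  let ?A = "\<lambda>j. {y (the_inv_into {0..<12} k j)}"
  have ind: "prob_space.indep_vars (measure_pmf D) (\<lambda>_. count_space UNIV) (\<lambda>i \<omega>. \<omega> i) ?J"
  proof -
    have "k ` {0..<12} \<subseteq> {0..<N}" using k by (auto simp: PiE_def Pi_def)
    moreover have "card (k ` {0..<12}) \<le> 12" using k(2) by (simp add: card_image)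
    ultimately show ?thesis using ku unfolding kwise_uniform_def by blast
  qed
  have kN: "k i < N" if "i < 12" for i using k that by (auto simp: PiE_def Pi_def)
  have "pmf (map_pmf (\<lambda>\<omega>. restrict (\<lambda>i. \<omega> (k i)) {0..<12}) D) y
      = measure_pmf.prob D ((\<lambda>\<omega>. restrict (\<lambda>i. \<omega> (k i)) {0..<12}) -` {y})"
    by (simp add: pmf_map)
  also have "\<dots> \<le> measure_pmf.prob D (\<Inter>j\<in>?J. (\<lambda>\<omega>. \<omega> j) -` ?A j \<inter> space (measure_pmf D))"
  proof (rule measure_pmf.finite_measure_mono)
    show "(\<lambda>\<omega>. restrict (\<lambda>i. \<omega> (k i)) {0..<12}) -` {y}
        \<subseteq> (\<Inter>j\<in>?J. (\<lambda>\<omega>. \<omega> j) -` ?A j \<inter> space (measure_pmf D))"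
    proof
      fix \<omega> assume "\<omega> \<in> (\<lambda>\<omega>. restrict (\<lambda>i. \<omega> (k i)) {0..<12}) -` {y}"
      then have e: "\<omega> (k i) = y i" if "i < 12" for i
        using that by (auto simp: restrict_def fun_eq_iff split: if_splits)
      show "\<omega> \<in> (\<Inter>j\<in>?J. (\<lambda>\<omega>. \<omega> j) -` ?A j \<inter> space (measure_pmf D))"
        using e k(2) by (auto simp: the_inv_into_f_f)
    qed
  qed simp
  also have "\<dots> = (\<Prod>j\<in>?J. measure_pmf.prob D ((\<lambda>\<omega>. \<omega> j) -` ?A j \<inter> space (measure_pmf D)))"
    by (rule prob_space.indep_varsD_finite[OF measure_pmf.prob_space_axioms ind]) auto
  also have "\<dots> \<le> (\<Prod>j\<in>?J. 1 / real p)"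
  proof (rule prod_mono)
    fix j assume "j \<in> ?J"
    then have "j < N" using kN by auto
    then show "0 \<le> measure_pmf.prob D ((\<lambda>\<omega>. \<omega> j) -` ?A j \<inter> space (measure_pmf D)) \<and>
          measure_pmf.prob D ((\<lambda>\<omega>. \<omega> j) -` ?A j \<inter> space (measure_pmf D)) \<le> 1 / real p"
      using prob_single_le[OF ku _ p, of j "y (the_inv_into {0..<12} k j)"]
      by (simp add: vimage_def)
  qed
  also have "\<dots> = 1 / real p ^ 12"
    using k(2) by (simp add: card_image power_one_over)
  finally show ?thesis .
qed

lemma prob_bad_le:
  assumes ku: "kwise_uniform p N 12 D" and p: "prime p"
    and k: "(k :: nat \<Rightarrow> nat) \<in> PiE {0..<12} (\<lambda>_. {0..<N})" "inj_on k {0..<12}"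
  shows "measure_pmf.prob D {\<omega>. bad p (restrict (\<lambda>i. \<omega> (k i)) {0..<12})} \<le> 4 / real p"
proof -
  have p0: "p > 0" using p prime_gt_0_nat by blast
  let ?X = "\<lambda>\<omega>. restrict (\<lambda>i. \<omega> (k i)) {0..<12}"
  let ?Q = "map_pmf ?X D"
  let ?P = "PiE {0..<12} (\<lambda>_. {0..<p})"
  let ?B = "{y \<in> ?P. bad p y}"
  have kN: "k i < N" if "i < 12" for i using k that by (auto simp: PiE_def Pi_def)
  have setQ: "set_pmf ?Q \<subseteq> ?P"
    using set_pmf_lt[OF ku kN p0] by auto
  have "measure_pmf.prob D {\<omega>. bad p (?X \<omega>)} = measure_pmf.prob ?Q {y. bad p y}"
    by (simp add: vimage_def)
  also have "\<dots> = measure_pmf.prob ?Q ({y. bad p y} \<inter> set_pmf ?Q)"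
    by (rule measure_Int_set_pmf[symmetric])
  also have "\<dots> \<le> measure_pmf.prob ?Q ?B"
    by (rule measure_pmf.finite_measure_mono) (use setQ in auto)
  also have "\<dots> = sum (pmf ?Q) ?B"
    by (rule measure_measure_pmf_finite) (simp add: finite_PiE)
  also have "\<dots> \<le> sum (\<lambda>_. 1 / real p ^ 12) ?B"
    by (rule sum_mono) (rule pmf_joint_le[OF ku p0 k])
  also have "\<dots> = real (card ?B) / real p ^ 12" by simp
  also have "\<dots> \<le> real (4 * p ^ 11) / real p ^ 12"
  proof (rule divide_right_mono)
    show "real (card ?B) \<le> real (4 * p ^ 11)" using bad_count[OF p] by (simp only: of_nat_le_iff)
  qed simp
  also have "\<dots> = 4 / real p" using p0 power_add[of "real p" 11 1] by (simp add: field_simps)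
  finally show ?thesis .
qed

definition evl :: "nat \<Rightarrow> nat \<times> nat \<Rightarrow> nat \<Rightarrow> nat" where
  "evl p P x = (fst P * x + snd P) mod p"

lemma evl_dvd:
  assumes "evl p P x = evl p Q x"
  shows "int p dvd (int (fst P) * int x + int (snd P) - (int (fst Q) * int x + int (snd Q)))"
proof -
  have "int ((fst P * x + snd P) mod p) = int ((fst Q * x + snd Q) mod p)"
    using assms by (simp add: evl_def)
  then have "int (fst P * x + snd P) mod int p = int (fst Q * x + snd Q) mod int p"
    by (simp add: zmod_int)
  then show ?thesis by (simp add: mod_eq_dvd_iff)
qed

lemma unique_label:
  assumes p: "prime p" and P: "P \<in> {0..<p} \<times> {0..<p}" and Q: "Q \<in> {0..<p} \<times> {0..<p}"
    and PQ: "P \<noteq> Q" and x: "x < p" and x': "x' < p"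
    and e: "evl p P x = evl p Q x" and e': "evl p P x' = evl p Q x'"
  shows "x = x'"
proof -
  have pp: "prime (int p)" using p by simp
  have d1: "int p dvd (int (fst P) * int x + int (snd P) - (int (fst Q) * int x + int (snd Q)))"
    using evl_dvd[OF e] .
  have d2: "int p dvd (int (fst P) * int x' + int (snd P) - (int (fst Q) * int x' + int (snd Q)))"
    using evl_dvd[OF e'] .
  have "int p dvd (int (fst P) * int x + int (snd P) - (int (fst Q) * int x + int (snd Q)))
      - (int (fst P) * int x' + int (snd P) - (int (fst Q) * int x' + int (snd Q)))"
    using d1 d2 by (rule dvd_diff)
  then have "int p dvd (int (fst P) - int (fst Q)) * (int x - int x')"
    by (simp add: algebra_simps)
  then have "int p dvd (int (fst P) - int (fst Q)) \<or> int p dvd (int x - int x')"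
    using pp by (simp add: prime_dvd_mult_iff)
  then show ?thesis
  proof
    assume "int p dvd (int (fst P) - int (fst Q))"
    then have a: "fst P = fst Q" using small_dvd_eq P Q by auto
    then have "int p dvd (int (snd P) - int (snd Q))" using d1 by simp
    then have "snd P = snd Q" using small_dvd_eq P Q by auto
    then have "P = Q" using a by (simp add: prod_eq_iff)
    then show ?thesis using PQ by simp
  next
    assume "int p dvd (int x - int x')"
    then show ?thesis using small_dvd_eq x x' by auto
  qed
qed

lemma config_bad:
  assumes p: "prime p"
    and g: "a \<in> {0..<p} \<times> {0..<p}" "c \<in> {0..<p} \<times> {0..<p}" and ac: "a \<noteq> c"
    and ys: "\<And>j. j < 4 \<Longrightarrow> evl p a (y j) = evl p (v j) (y j)"
    and yt: "\<And>j. j < 4 \<Longrightarrow> evl p b (y (j+4)) = evl p (v j) (y (j+4))"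
    and yz: "\<And>j. j < 4 \<Longrightarrow> evl p c (y (j+8)) = evl p (v j) (y (j+8))"
    and n1: "y 4 \<noteq> y 0" and n2: "y 1 \<noteq> y 2"
  shows "bad p y"
proof -
  define w :: "nat \<Rightarrow> int" where "w = (\<lambda>k. if k = 0 then int (fst a) - int (fst c) else if k = 1 then int (snd a) - int (snd c)
      else if k = 2 then int (fst b) - int (fst c) else int (snd b) - int (snd c))"
  have pp: "prime (int p)" using p by simp
  have row: "int p dvd dotw (RR y j) w" if j: "j < 4" for j
    unfolding RR_def w_def
    by (rule row_dvd[where C = "int (fst (v j))" and D = "int (snd (v j))"])
       (use evl_dvd[OF ys[OF j]] evl_dvd[OF yt[OF j]] evl_dvd[OF yz[OF j]] in simp_all)
  have nw: "\<not> (int p dvd w 0 \<and> int p dvd w 1)"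
  proof
    assume h: "int p dvd w 0 \<and> int p dvd w 1"
    then have "fst a = fst c" "snd a = snd c" using small_dvd_eq g by (auto simp: w_def)
    then show False using ac by (simp add: prod_eq_iff)
  qed
  have "int p dvd det4 (RR y 0) (RR y 1) (RR y 2) (RR y 3)"
    by (rule det4_dvd_from_kernel[OF pp nw]) (simp_all add: row)
  then show ?thesis using n1 n2 by (simp add: bad_def)
qed

definition Tr :: "'a set \<Rightarrow> ('a \<times> 'a \<times> 'a) set" where
  "Tr A = (SIGMA x:A. SIGMA y:A - {x}. A - {x, y})"

lemma card_Tr: "finite A \<Longrightarrow> card (Tr A) = card A * (card A - 1) * (card A - 2)"
proof -
  assume f: "finite A"
  have "card (Tr A) = (\<Sum>x\<in>A. \<Sum>y\<in>A - {x}. card (A - {x, y}))"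
    unfolding Tr_def using f by simp
  also have "\<dots> = (\<Sum>x\<in>A. \<Sum>y\<in>A - {x}. card A - 2)"
    using f by (intro sum.cong refl) (auto simp: card_Diff_subset)
  also have "\<dots> = (\<Sum>x\<in>A. (card A - 1) * (card A - 2))"
    using f by (intro sum.cong refl) (simp add: card_Diff_singleton)
  also have "\<dots> = card A * (card A - 1) * (card A - 2)" by simp
  finally show ?thesis .
qed

lemma four_distinct:
  assumes "finite A" "card A \<ge> 4"
  obtains v :: "nat \<Rightarrow> 'a" where "inj_on v {0..<4}" "v ` {0..<4} \<subseteq> A"
proof -
  obtain B where B: "B \<subseteq> A" "card B = 4" "finite B" by (rule obtain_subset_with_card_n[OF assms(2)])
  then obtain h where "bij_betw h {0..<card B} B" using ex_bij_betw_nat_finite by blast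
  then have h: "bij_betw h {0..<4} B" using B(2) by simp
  show ?thesis
  proof (rule that)
    show "inj_on h {0..<4}" using h by (rule bij_betw_imp_inj_on)
    show "h ` {0..<4} \<subseteq> A" using bij_betw_imp_surj_on[OF h] B(1) by simp
  qed
qed

context
  fixes p :: nat and L :: "(nat \<times> nat) set" and T :: "nat set"
  assumes p: "prime p" and Lg: "L \<subseteq> {0..<p} \<times> {0..<p}" and TI: "T \<subseteq> I_lines p L"
begin

definition ee :: "nat \<Rightarrow> (nat \<times> nat) \<times> (nat \<times> nat)" where
  "ee x = (SOME pq. fst pq \<in> L \<and> snd pq \<in> L \<and> fst pq \<noteq> snd pq \<and> evl p (fst pq) x = evl p (snd pq) x)"

lemma ee: assumes "x \<in> T"
  shows "fst (ee x) \<in> L \<and> snd (ee x) \<in> L \<and> fst (ee x) \<noteq> snd (ee x) \<and> evl p (fst (ee x)) x = evl p (snd (ee x)) x \<and> x < p"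
proof -
  have x: "x \<in> I_lines p L" using assms TI by auto
  then obtain P Q where PQ: "P \<in> L" "Q \<in> L" "P \<noteq> Q" "evl p P x = evl p Q x"
    unfolding I_lines_def evl_def by auto
  have "\<exists>pq. fst pq \<in> L \<and> snd pq \<in> L \<and> fst pq \<noteq> snd pq \<and> evl p (fst pq) x = evl p (snd pq) x"
    using PQ by (intro exI[of _ "(P, Q)"]) auto
  then have "fst (ee x) \<in> L \<and> snd (ee x) \<in> L \<and> fst (ee x) \<noteq> snd (ee x) \<and> evl p (fst (ee x)) x = evl p (snd (ee x)) x"
    unfolding ee_def by (rule someI_ex)
  moreover have "x < p" using x by (simp add: I_lines_def)
  ultimately show ?thesis by blast
qed

definition oth :: "nat \<times> nat \<Rightarrow> nat \<Rightarrow> nat \<times> nat" where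
  "oth v x = (if fst (ee x) = v then snd (ee x) else fst (ee x))"

definition Nv :: "nat \<times> nat \<Rightarrow> nat set" where
  "Nv v = {x \<in> T. fst (ee x) = v \<or> snd (ee x) = v}"

lemma finT: "finite T"
proof -
  have "T \<subseteq> {0..<p}" using TI by (auto simp: I_lines_def)
  then show ?thesis using finite_subset by blast
qed

lemma finL: "finite L"
  using Lg finite_subset by blast

lemma oth: assumes "x \<in> Nv v"
  shows "x \<in> T \<and> v \<in> L \<and> oth v x \<in> L \<and> oth v x \<noteq> v \<and> evl p v x = evl p (oth v x) x
     \<and> {fst (ee x), snd (ee x)} = {v, oth v x} \<and> x < p"
  using assms ee[of x] by (auto simp: Nv_def oth_def)

lemma oth_inj: assumes "x \<in> Nv v" "x' \<in> Nv v" "oth v x = oth v x'" shows "x = x'"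
proof -
  have g: "v \<in> {0..<p} \<times> {0..<p}" "oth v x \<in> {0..<p} \<times> {0..<p}"
    using oth[OF assms(1)] Lg by auto
  show ?thesis
    by (rule unique_label[OF p g]) (use oth[OF assms(1)] oth[OF assms(2)] assms(3) in auto)
qed

lemma sum_deg: "(\<Sum>v\<in>L. card (Nv v)) = 2 * card T"
proof -
  have "(\<Sum>v\<in>L. card (Nv v)) = (\<Sum>v\<in>L. \<Sum>x\<in>T. if fst (ee x) = v \<or> snd (ee x) = v then 1 else 0)"
  proof (intro sum.cong refl)
    fix v
    show "card (Nv v) = (\<Sum>x\<in>T. if fst (ee x) = v \<or> snd (ee x) = v then 1 else 0)"
      unfolding Nv_def by (subst sum.inter_filter[symmetric]) (simp_all add: finT)
  qed
  also have "\<dots> = (\<Sum>x\<in>T. \<Sum>v\<in>L. if fst (ee x) = v \<or> snd (ee x) = v then 1 else 0)"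
    by (rule sum.swap)
  also have "\<dots> = (\<Sum>x\<in>T. 2)"
  proof (intro sum.cong refl)
    fix x assume x: "x \<in> T"
    have "(\<Sum>v\<in>L. if fst (ee x) = v \<or> snd (ee x) = v then 1 else 0) = card {v \<in> L. fst (ee x) = v \<or> snd (ee x) = v}"
      by (subst sum.inter_filter[symmetric]) (simp_all add: finL)
    also have "{v \<in> L. fst (ee x) = v \<or> snd (ee x) = v} = {fst (ee x), snd (ee x)}"
      using ee[OF x] by auto
    also have "card \<dots> = 2" using ee[OF x] by simp
    finally show "(\<Sum>v\<in>L. if fst (ee x) = v \<or> snd (ee x) = v then 1 else 0) = (2::nat)" .
  qed
  finally show ?thesis by simp
qed


lemma finNv: "finite (Nv v)" using finT by (simp add: Nv_def)

definition W :: "((nat \<times> nat) \<times> nat \<times> nat \<times> nat) set" where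
  "W = (SIGMA v:L. Tr (Nv v))"

definition CN :: "nat \<times> nat \<Rightarrow> nat \<times> nat \<Rightarrow> nat \<times> nat \<Rightarrow> (nat \<times> nat) set" where
  "CN a b c = {v \<in> L. \<exists>t \<in> Tr (Nv v). oth v (fst t) = a \<and> oth v (fst (snd t)) = b \<and> oth v (snd (snd t)) = c}"

lemma card_W: "card W = (\<Sum>v\<in>L. card (Nv v) * (card (Nv v) - 1) * (card (Nv v) - 2))"
proof -
  have "card W = (\<Sum>v\<in>L. card (Tr (Nv v)))"
    unfolding W_def using finL finNv by (simp add: Tr_def)
  also have "\<dots> = (\<Sum>v\<in>L. card (Nv v) * (card (Nv v) - 1) * (card (Nv v) - 2))"
    using finNv by (simp add: card_Tr)
  finally show ?thesis .
qed

lemma W_le: "card W \<le> (\<Sum>abc\<in>L \<times> L \<times> L. card ((\<lambda>(a, b, c). CN a b c) abc))"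
proof -
  define \<psi> :: "(nat \<times> nat) \<times> nat \<times> nat \<times> nat \<Rightarrow> ((nat \<times> nat) \<times> (nat \<times> nat) \<times> (nat \<times> nat)) \<times> (nat \<times> nat)"
    where "\<psi> = (\<lambda>(v, x, y, z). ((oth v x, oth v y, oth v z), v))"
  have inj: "inj_on \<psi> W"
  proof (rule inj_onI)
    fix s t assume s: "s \<in> W" and t: "t \<in> W" and e: "\<psi> s = \<psi> t"
    obtain v x y z where sv: "s = (v, x, y, z)" by (cases s) auto
    obtain v' x' y' z' where tv: "t = (v', x', y', z')" by (cases t) auto
    have vv: "v' = v" using e by (simp add: sv tv \<psi>_def)
    have m: "x \<in> Nv v" "y \<in> Nv v" "z \<in> Nv v" "x' \<in> Nv v" "y' \<in> Nv v" "z' \<in> Nv v"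
      using s t by (auto simp: sv tv vv W_def Tr_def)
    have o: "oth v x = oth v x'" "oth v y = oth v y'" "oth v z = oth v z'"
      using e by (simp_all add: sv tv vv \<psi>_def)
    show "s = t" using oth_inj[OF m(1) m(4) o(1)] oth_inj[OF m(2) m(5) o(2)] oth_inj[OF m(3) m(6) o(3)]
      by (simp add: sv tv vv)
  qed
  have sub: "\<psi> ` W \<subseteq> (SIGMA abc:L \<times> L \<times> L. (\<lambda>(a, b, c). CN a b c) abc)"
  proof
    fix u assume "u \<in> \<psi> ` W"
    then obtain v x y z where s: "(v, x, y, z) \<in> W" and u: "u = \<psi> (v, x, y, z)" by auto
    have m: "x \<in> Nv v" "y \<in> Nv v" "z \<in> Nv v" "v \<in> L" using s by (auto simp: W_def Tr_def)
    have "v \<in> CN (oth v x) (oth v y) (oth v z)"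
      unfolding CN_def using s m(4) by (auto simp: W_def intro!: bexI[of _ "(x, y, z)"])
    then show "u \<in> (SIGMA abc:L \<times> L \<times> L. (\<lambda>(a, b, c). CN a b c) abc)"
      using oth[OF m(1)] oth[OF m(2)] oth[OF m(3)] by (simp add: u \<psi>_def)
  qed
  have finCN: "finite (CN a b c)" for a b c using finL by (simp add: CN_def)
  have "card W = card (\<psi> ` W)" using inj by (simp add: card_image)
  also have "\<dots> \<le> card (SIGMA abc:L \<times> L \<times> L. (\<lambda>(a, b, c). CN a b c) abc)"
    by (rule card_mono[OF _ sub]) (use finL finCN in \<open>auto intro!: finite_SigmaI\<close>)
  also have "\<dots> = (\<Sum>abc\<in>L \<times> L \<times> L. card ((\<lambda>(a, b, c). CN a b c) abc))"
    using finL finCN by (subst card_SigmaI) auto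
  finally show ?thesis .
qed


definition NoK :: bool where
  "NoK \<longleftrightarrow> (\<forall>a b c (v :: nat \<Rightarrow> nat \<times> nat) (y :: nat \<Rightarrow> nat). a \<in> L \<longrightarrow> b \<in> L \<longrightarrow> c \<in> L \<longrightarrow> a \<noteq> c \<longrightarrow>
     (\<forall>j<4. v j \<in> L) \<longrightarrow>
     (\<forall>j<4. evl p a (y j) = evl p (v j) (y j)) \<longrightarrow>
     (\<forall>j<4. evl p b (y (j+4)) = evl p (v j) (y (j+4))) \<longrightarrow>
     (\<forall>j<4. evl p c (y (j+8)) = evl p (v j) (y (j+8))) \<longrightarrow>
     (\<forall>i<12. y i \<in> T) \<longrightarrow> inj_on y {0..<12} \<longrightarrow> False)"

lemma CN_le: assumes nk: NoK shows "card (CN a b c) \<le> 3"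
proof (rule ccontr)
  assume "\<not> card (CN a b c) \<le> 3"
  then have c4: "card (CN a b c) \<ge> 4" by simp
  have finCN: "finite (CN a b c)" using finL by (simp add: CN_def)
  obtain v :: "nat \<Rightarrow> nat \<times> nat" where vinj: "inj_on v {0..<4}" and vCN: "v ` {0..<4} \<subseteq> CN a b c"
    by (rule four_distinct[OF finCN c4])
  define P where "P j t \<longleftrightarrow> t \<in> Tr (Nv (v j)) \<and> oth (v j) (fst t) = a \<and> oth (v j) (fst (snd t)) = b \<and> oth (v j) (snd (snd t)) = c" for j t
  define tr where "tr j = (SOME t. P j t)" for j
  have trP: "P j (tr j)" if "j < 4" for j
  proof -
    have "v j \<in> CN a b c" using vCN that by auto
    then have "\<exists>t. P j t" unfolding CN_def P_def by blast
    then show ?thesis unfolding tr_def by (rule someI_ex)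
  qed
  have vL: "v j \<in> L" if "j < 4" for j
  proof -
    have "v j \<in> CN a b c" using vCN that by auto
    then show ?thesis by (simp add: CN_def)
  qed
  define comp :: "nat \<Rightarrow> nat \<times> nat \<times> nat \<Rightarrow> nat" where
    "comp q t = (if q = 0 then fst t else if q = 1 then fst (snd t) else snd (snd t))" for q t
  define abc where "abc q = (if q = 0 then a else if q = 1 then b else c)" for q :: nat
  define lab where "lab i = comp (i div 4) (tr (i mod 4))" for i
  have L1: "lab i \<in> Nv (v (i mod 4)) \<and> oth (v (i mod 4)) (lab i) = abc (i div 4)" if "i < 12" for i
  proof -
    have j: "i mod 4 < 4" by simp
    have q: "i div 4 = 0 \<or> i div 4 = 1 \<or> i div 4 = 2" using that by linarith
    show ?thesis using trP[OF j] q unfolding lab_def comp_def abc_def P_def Tr_def by auto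
  qed
  have L2: "lab (j + 4 * q) \<noteq> lab (j + 4 * q')" if "j < 4" "q < 3" "q' < 3" "q \<noteq> q'" for j q q'
  proof -
    have "(j + 4 * q) mod 4 = j" "(j + 4 * q') mod 4 = j" "(j + 4 * q) div 4 = q" "(j + 4 * q') div 4 = q'"
      using that by auto
    moreover have "q = 0 \<or> q = 1 \<or> q = 2" "q' = 0 \<or> q' = 1 \<or> q' = 2" using that by auto
    ultimately show ?thesis using trP[OF that(1)] that(4) unfolding lab_def comp_def P_def Tr_def by auto
  qed
  have abc_ne: "abc q \<noteq> abc q'" if "q < 3" "q' < 3" "q \<noteq> q'" for q q'
  proof
    assume e: "abc q = abc q'"
    have a1: "lab (0 + 4 * q) \<in> Nv (v 0)" "oth (v 0) (lab (0 + 4 * q)) = abc q"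
      using L1[of "0 + 4 * q"] that by auto
    have a2: "lab (0 + 4 * q') \<in> Nv (v 0)" "oth (v 0) (lab (0 + 4 * q')) = abc q'"
      using L1[of "0 + 4 * q'"] that by auto
    have "lab (0 + 4 * q) = lab (0 + 4 * q')" using oth_inj[OF a1(1) a2(1)] a1(2) a2(2) e by simp
    then show False using L2[of 0 q q'] that by simp
  qed
  have v_ne: "v j \<noteq> abc q" if "j < 4" "q < 3" for j q
  proof -
    have "(j + 4 * q) mod 4 = j" "(j + 4 * q) div 4 = q" using that by auto
    then show ?thesis using L1[of "j + 4 * q"] oth[of "lab (j + 4 * q)" "v j"] that by auto
  qed
  have abcL: "abc q \<in> L" if "q < 3" for q
    using L1[of "4 * q"] oth[of "lab (4 * q)" "v 0"] that by auto
  have ac: "a \<noteq> c" using abc_ne[of 0 2] by (simp add: abc_def)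
  have ev: "evl p (abc q) (lab (j + 4 * q)) = evl p (v j) (lab (j + 4 * q))" if "j < 4" "q < 3" for j q
  proof -
    have "(j + 4 * q) mod 4 = j" "(j + 4 * q) div 4 = q" using that by auto
    then show ?thesis using L1[of "j + 4 * q"] oth[of "lab (j + 4 * q)" "v j"] that by auto
  qed
  have labT: "lab i \<in> T" if "i < 12" for i using L1[OF that] oth by blast
  have inj: "inj_on lab {0..<12}"
  proof (rule inj_onI)
    fix i i' assume i: "i \<in> {0..<12}" and i': "i' \<in> {0..<12}" and e: "lab i = lab i'"
    have "{v (i mod 4), abc (i div 4)} = {fst (ee (lab i)), snd (ee (lab i))}"
      using L1[of i] oth[of "lab i" "v (i mod 4)"] i by auto
    also have "\<dots> = {v (i' mod 4), abc (i' div 4)}"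
      using L1[of i'] oth[of "lab i'" "v (i' mod 4)"] i' e by auto
    finally have d: "{v (i mod 4), abc (i div 4)} = {v (i' mod 4), abc (i' div 4)}" .
    have q: "i div 4 < 3" "i' div 4 < 3" using i i' by auto
    have "v (i mod 4) \<noteq> abc (i' div 4)" using v_ne q by simp
    then have "v (i mod 4) = v (i' mod 4) \<and> abc (i div 4) = abc (i' div 4)"
      using d by (auto simp: doubleton_eq_iff)
    then have "i mod 4 = i' mod 4" "i div 4 = i' div 4"
      using vinj abc_ne q by (auto simp: inj_on_def)
    then show "i = i'" by (metis div_mult_mod_eq)
  qed
  have e0: "\<forall>j<4. evl p a (lab j) = evl p (v j) (lab j)"
    using ev[of _ 0] by (simp add: abc_def)
  have e1: "\<forall>j<4. evl p b (lab (j+4)) = evl p (v j) (lab (j+4))"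
    using ev[of _ 1] by (simp add: abc_def)
  have e2: "\<forall>j<4. evl p c (lab (j+8)) = evl p (v j) (lab (j+8))"
    using ev[of _ 2] by (simp add: abc_def)
  have "a \<in> L" "b \<in> L" "c \<in> L" using abcL[of 0] abcL[of 1] abcL[of 2] by (simp_all add: abc_def)
  then show False
    by (rule nk[unfolded NoK_def, rule_format, of a b c v lab]) (use ac vL e0 e1 e2 labT inj in auto)
qed


lemma tri_bound: assumes nk: NoK
  shows "(\<Sum>v\<in>L. card (Nv v) * (card (Nv v) - 1) * (card (Nv v) - 2)) \<le> 3 * card L ^ 3"
proof -
  have "(\<Sum>v\<in>L. card (Nv v) * (card (Nv v) - 1) * (card (Nv v) - 2)) = card W" by (simp add: card_W)
  also have "\<dots> \<le> (\<Sum>abc\<in>L \<times> L \<times> L. card ((\<lambda>(a, b, c). CN a b c) abc))" by (rule W_le)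
  also have "\<dots> \<le> (\<Sum>abc\<in>L \<times> L \<times> L. 3)"
    by (rule sum_mono) (auto simp: CN_le[OF nk])
  also have "\<dots> = 3 * card L ^ 3" by (simp add: card_cartesian_product power3_eq_cube)
  finally show ?thesis .
qed

lemma card_L_ge2: assumes "T \<noteq> {}" shows "card L \<ge> 2"
proof -
  obtain x where x: "x \<in> T" using assms by auto
  have "{fst (ee x), snd (ee x)} \<subseteq> L" using ee[OF x] by auto
  then have "card {fst (ee x), snd (ee x)} \<le> card L" using finL by (rule card_mono[rotated])
  then show ?thesis using ee[OF x] by simp
qed

lemma main_comb: assumes nk: NoK and ne: "T \<noteq> {}"
  shows "real (card T) ^ 3 < 4 * real (card L) ^ 5"
proof -
  define n where "n = real (card L)"
  define m where "m = real (card T)"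
  have n2: "n \<ge> 2" using card_L_ge2[OF ne] by (simp add: n_def)
  show ?thesis
  proof (cases "m < 2 * n")
    case True
    have "m ^ 3 < (2 * n) ^ 3"
      using True by (intro power_strict_mono) (auto simp: m_def)
    also have "\<dots> = 8 * n ^ 3" by (simp add: power_mult_distrib)
    also have "\<dots> \<le> 4 * n ^ 5"
    proof -
      have "2 \<le> n ^ 2" using mult_mono[OF n2 n2] n2 by (simp add: power2_eq_square)
      then have "8 * n ^ 3 \<le> 4 * n ^ 3 * n ^ 2" using n2 by (simp add: mult_left_mono)
      also have "\<dots> = 4 * n ^ 5" by (simp add: power_add[symmetric])
      finally show ?thesis .
    qed
    finally show ?thesis by (simp add: m_def n_def)
  next
    case False
    define d where "d v = card (Nv v)" for v
    define y where "y v = max (real (d v) - 2) 0" for v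
    have y0: "y v \<ge> 0" for v by (simp add: y_def)
    have y3: "y v ^ 3 \<le> real (d v * (d v - 1) * (d v - 2))" for v
    proof (cases "d v \<ge> 2")
      case True
      then have e: "real (d v * (d v - 1) * (d v - 2)) = real (d v) * (real (d v) - 1) * (real (d v) - 2)"
        by (simp add: of_nat_diff)
      have "y v ^ 3 = (real (d v) - 2) ^ 2 * (real (d v) - 2)" using True
        by (simp add: y_def power2_eq_square power3_eq_cube)
      also have "\<dots> \<le> (real (d v) * (real (d v) - 1)) * (real (d v) - 2)"
        using True by (intro mult_right_mono) (auto simp: power2_eq_square algebra_simps)
      finally show ?thesis by (simp only: e)
    next
      case False
      then show ?thesis by (simp add: y_def)
    qed
    have sumy: "(\<Sum>v\<in>L. y v) \<ge> 2 * m - 2 * n"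
    proof -
      have "(\<Sum>v\<in>L. y v) \<ge> (\<Sum>v\<in>L. real (d v) - 2)"
        by (rule sum_mono) (simp add: y_def)
      also have "(\<Sum>v\<in>L. real (d v) - 2) = real (\<Sum>v\<in>L. d v) - 2 * n"
        by (simp add: sum_subtractf n_def)
      also have "real (\<Sum>v\<in>L. d v) = 2 * m" using sum_deg by (simp add: d_def m_def)
      finally show ?thesis .
    qed
    have pm: "(\<Sum>v\<in>L. y v) ^ 3 \<le> n ^ 2 * (\<Sum>v\<in>L. y v ^ 3)"
    proof -
      define S where "S = (\<Sum>v\<in>L. y v)"
      define c where "c = S / n"
      have c0: "c \<ge> 0" using y0 n2 by (simp add: c_def S_def sum_nonneg)
      have t: "y v ^ 3 \<ge> 3 * c ^ 2 * y v - 2 * c ^ 3" for v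
      proof -
        have "0 \<le> (y v - c) ^ 2 * (y v + 2 * c)" using y0[of v] c0 by simp
        then show ?thesis by (simp add: algebra_simps power2_eq_square power3_eq_cube)
      qed
      have "(\<Sum>v\<in>L. y v ^ 3) \<ge> (\<Sum>v\<in>L. 3 * c ^ 2 * y v - 2 * c ^ 3)"
        by (rule sum_mono) (rule t)
      also have "(\<Sum>v\<in>L. 3 * c ^ 2 * y v - 2 * c ^ 3) = 3 * c ^ 2 * S - 2 * c ^ 3 * n"
        by (simp add: sum_subtractf sum_distrib_left S_def n_def)
      also have "\<dots> = S ^ 3 / n ^ 2" using n2
        by (simp add: c_def field_simps power2_eq_square power3_eq_cube)
      finally have "S ^ 3 / n ^ 2 \<le> (\<Sum>v\<in>L. y v ^ 3)" .
      then show ?thesis using n2 by (simp add: S_def field_simps)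
    qed
    have s3: "(\<Sum>v\<in>L. y v ^ 3) \<le> 3 * n ^ 3"
    proof -
      have "(\<Sum>v\<in>L. y v ^ 3) \<le> (\<Sum>v\<in>L. real (d v * (d v - 1) * (d v - 2)))"
        by (rule sum_mono) (rule y3)
      also have "\<dots> = real (\<Sum>v\<in>L. d v * (d v - 1) * (d v - 2))" by simp
      also have "\<dots> \<le> real (3 * card L ^ 3)"
        using tri_bound[OF nk] unfolding d_def by (simp only: of_nat_le_iff)
      finally show ?thesis by (simp add: n_def)
    qed
    have mn: "m \<ge> 2 * n" using False by simp
    have "(m - n) ^ 3 * 8 = (2 * m - 2 * n) ^ 3" by (simp add: power3_eq_cube algebra_simps)
    then have "(m - n) ^ 3 * 8 \<le> (2 * m - 2 * n) ^ 3" by simp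
    also have "\<dots> \<le> (\<Sum>v\<in>L. y v) ^ 3"
      using sumy mn n2 by (intro power_mono) auto
    also have "\<dots> \<le> n ^ 2 * (3 * n ^ 3)"
      using pm s3 n2 by (meson mult_left_mono order_trans zero_le_power2)
    finally have A: "(m - n) ^ 3 * 8 \<le> 3 * n ^ 5" by (simp add: power_add[symmetric] algebra_simps)
    have "m ^ 3 \<le> (2 * (m - n)) ^ 3" using mn n2 by (intro power_mono) auto
    also have "\<dots> = (m - n) ^ 3 * 8" by (simp add: power3_eq_cube algebra_simps)
    finally have "m ^ 3 \<le> 3 * n ^ 5" using A by linarith
    also have "\<dots> < 4 * n ^ 5" using n2 by simp
    finally show ?thesis by (simp add: m_def n_def)
  qed
qed

end

lemma I_lines_full:
  assumes p: "prime p"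
  shows "I_lines p ({0..<p} \<times> {0..<p}) = {0..<p}"
proof
  show "I_lines p ({0..<p} \<times> {0..<p}) \<subseteq> {0..<p}" by (auto simp: I_lines_def)
  show "{0..<p} \<subseteq> I_lines p ({0..<p} \<times> {0..<p})"
  proof
    fix x assume x: "x \<in> {0..<p}"
    have p1: "1 < p" using p prime_gt_1_nat by blast
    have e: "(1 * x + (p - x) mod p) mod p = (0 * x + 0) mod p"
    proof (cases "x = 0")
      case True then show ?thesis by simp
    next
      case False
      then have "(p - x) mod p = p - x" using x by simp
      then show ?thesis using x by simp
    qed
    have m1: "(1, (p - x) mod p) \<in> {0..<p} \<times> {0..<p}" "(0, 0) \<in> {0..<p} \<times> {0..<p}"
      using p1 by auto
    show "x \<in> I_lines p ({0..<p} \<times> {0..<p})"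
      unfolding I_lines_def mem_Collect_eq
    proof (intro conjI bexI[OF _ m1(1)])
      show "x \<in> {0..<p}" by fact
      show "case (1, (p - x) mod p) of (a, b) \<Rightarrow> \<exists>(a', b')\<in>{0..<p} \<times> {0..<p}. (a, b) \<noteq> (a', b') \<and> (a * x + b) mod p = (a' * x + b') mod p"
        unfolding case_prod_conv
        by (rule bexI[OF _ m1(2)]) (use e in simp)
    qed
  qed
qed

lemma final_ineq:
  fixes n m s \<alpha> :: real
  assumes "0 < \<alpha> * s" "\<alpha> * s \<le> m" "m ^ 3 < 4 * n ^ 5" "0 \<le> n"
  shows "(\<alpha> * s / root 3 4) powr (3/5) < n"
proof -
  define X where "X = \<alpha> * s / root 3 4"
  have r: "root 3 4 ^ 3 = (4::real)" by (simp add: real_root_pow_pos2)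
  have rp: "root 3 4 > (0::real)" by simp
  have X0: "X > 0" using assms(1) rp by (simp add: X_def)
  have "X ^ 3 = (\<alpha> * s) ^ 3 / 4" by (simp add: X_def power_divide r)
  also have "\<dots> \<le> m ^ 3 / 4" using assms(1,2) by (intro divide_right_mono power_mono) auto
  also have "\<dots> < n ^ 5" using assms(3) by simp
  finally have X3: "X ^ 3 < n ^ 5" .
  have n0: "n > 0"
  proof (rule ccontr)
    assume "\<not> n > 0" then have "n = 0" using assms(4) by simp
    then show False using X3 X0 by simp
  qed
  have "X powr (3/5) = (X powr 3) powr (1/5)" by (simp add: powr_powr)
  also have "X powr 3 = X ^ 3" using X0 by (simp add: powr_numeral)
  also have "(X ^ 3) powr (1/5) < (n ^ 5) powr (1/5)"
    using X3 X0 by (intro powr_less_mono2) auto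
  also have "(n ^ 5) powr (1/5) = n"
  proof -
    have "n ^ 5 = n powr 5" using n0 by (simp add: powr_numeral)
    then have "(n ^ 5) powr (1/5) = (n powr 5) powr (1/5)" by simp
    also have "\<dots> = n" using n0 powr_powr[of n 5 "1/5"] by simp
    finally show ?thesis .
  qed
  finally show ?thesis by (simp add: X_def)
qed


lemma good_target:
  fixes N p :: nat and \<omega> :: "nat \<Rightarrow> nat" and \<alpha> :: real
  assumes p: "prime p" and a0: "0 < \<alpha>" and a1: "\<alpha> \<le> 1" and N: "N > 0"
    and lt: "\<forall>i<N. \<omega> i < p"
    and good: "\<forall>k \<in> PiE {0..<12} (\<lambda>_. {0..<N}). inj_on k {0..<12} \<longrightarrow> \<not> bad p (restrict (\<lambda>i. \<omega> (k i)) {0..<12})"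
  shows "real (gen_complexity p \<alpha> (\<omega> ` {0..<N})) > (\<alpha> * real (card (\<omega> ` {0..<N})) / root 3 4) powr (3/5)"
proof -
  define S where "S = \<omega> ` {0..<N}"
  have Sp: "S \<subseteq> {0..<p}" using lt by (auto simp: S_def)
  have S1: "card S \<ge> 1"
  proof -
    have "S \<noteq> {}" using N by (simp add: S_def)
    moreover have "finite S" by (simp add: S_def)
    ultimately show ?thesis by (simp add: Suc_le_eq card_gt_0_iff)
  qed
  let ?Q = "\<lambda>n. \<exists>L. L \<subseteq> {0..<p} \<times> {0..<p} \<and> card L = n \<and> real (card (S \<inter> I_lines p L)) \<ge> \<alpha> * real (card S)"
  have ex: "?Q (card ({0..<p} \<times> {0..<p}))"
  proof (intro exI conjI)
    show "{0..<p} \<times> {0..<p} \<subseteq> {0..<p} \<times> {0..<p}" by simp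
    show "card ({0..<p} \<times> {0..<p}) = card ({0..<p} \<times> {0..<p})" by simp
    have "S \<inter> I_lines p ({0..<p} \<times> {0..<p}) = S" using Sp I_lines_full[OF p] by auto
    then show "real (card (S \<inter> I_lines p ({0..<p} \<times> {0..<p}))) \<ge> \<alpha> * real (card S)"
      using a1 mult_right_mono[OF a1, of "real (card S)"] by simp
  qed
  define n0 where "n0 = gen_complexity p \<alpha> S"
  have "?Q n0" unfolding n0_def gen_complexity_def by (rule LeastI_ex) (use ex in blast)
  then obtain L where Lg: "L \<subseteq> {0..<p} \<times> {0..<p}" and cL: "card L = n0"
    and cT: "real (card (S \<inter> I_lines p L)) \<ge> \<alpha> * real (card S)" by blast
  define T where "T = S \<inter> I_lines p L"
  have TI: "T \<subseteq> I_lines p L" by (simp add: T_def)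
  have pos: "0 < \<alpha> * real (card S)" using a0 S1 by simp
  have Tne: "T \<noteq> {}"
  proof
    assume "T = {}" then show False using cT pos by (simp add: T_def)
  qed
  have nk: "NoK p L T"
    unfolding NoK_def[OF p Lg TI]
  proof (intro allI impI)
    fix a b c and v :: "nat \<Rightarrow> nat \<times> nat" and y :: "nat \<Rightarrow> nat"
    assume aL: "a \<in> L" and bL: "b \<in> L" and cL: "c \<in> L" and ac: "a \<noteq> c"
      and vL: "\<forall>j<4. v j \<in> L"
      and e0: "\<forall>j<4. evl p a (y j) = evl p (v j) (y j)"
      and e1: "\<forall>j<4. evl p b (y (j+4)) = evl p (v j) (y (j+4))"
      and e2: "\<forall>j<4. evl p c (y (j+8)) = evl p (v j) (y (j+8))"
      and yT: "\<forall>i<12. y i \<in> T" and yinj: "inj_on y {0..<12}"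
    define k where "k = restrict (\<lambda>i. inv_into {0..<N} \<omega> (y i)) {0..<12}"
    have yS: "y i \<in> \<omega> ` {0..<N}" if "i < 12" for i using yT that by (auto simp: T_def S_def)
    have wk: "\<omega> (k i) = y i" if "i < 12" for i
      using yS[OF that] that by (simp add: k_def f_inv_into_f)
    have kP: "k \<in> PiE {0..<12} (\<lambda>_. {0..<N})"
    proof -
      have "inv_into {0..<N} \<omega> (y i) \<in> {0..<N}" if "i < 12" for i
        using inv_into_into[OF yS[OF that]] .
      then show ?thesis by (auto simp: k_def)
    qed
    have kinj: "inj_on k {0..<12}"
    proof (rule inj_onI)
      fix i i' assume "i \<in> {0..<12}" "i' \<in> {0..<12}" "k i = k i'"
      then have "y i = y i'" using wk by (metis atLeastLessThan_iff)
      then show "i = i'" using yinj \<open>i \<in> {0..<12}\<close> \<open>i' \<in> {0..<12}\<close> by (auto dest: inj_onD)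
    qed
    have nb: "\<not> bad p (restrict (\<lambda>i. \<omega> (k i)) {0..<12})" using good kP kinj by blast
    have ry: "restrict (\<lambda>i. \<omega> (k i)) {0..<12} i = y i" if "i < 12" for i using wk that by simp
    have g: "a \<in> {0..<p} \<times> {0..<p}" "c \<in> {0..<p} \<times> {0..<p}" using aL cL Lg by auto
    have "bad p (restrict (\<lambda>i. \<omega> (k i)) {0..<12})"
    proof (rule config_bad[OF p g ac, where b = b and v = v])
      fix j :: nat assume j: "j < 4"
      show "evl p a (restrict (\<lambda>i. \<omega> (k i)) {0..<12} j) = evl p (v j) (restrict (\<lambda>i. \<omega> (k i)) {0..<12} j)"
        using e0 j ry[of j] by simp
      show "evl p b (restrict (\<lambda>i. \<omega> (k i)) {0..<12} (j+4)) = evl p (v j) (restrict (\<lambda>i. \<omega> (k i)) {0..<12} (j+4))"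
        using e1 j ry[of "j+4"] by simp
      show "evl p c (restrict (\<lambda>i. \<omega> (k i)) {0..<12} (j+8)) = evl p (v j) (restrict (\<lambda>i. \<omega> (k i)) {0..<12} (j+8))"
        using e2 j ry[of "j+8"] by simp
    next
      show "restrict (\<lambda>i. \<omega> (k i)) {0..<12} 4 \<noteq> restrict (\<lambda>i. \<omega> (k i)) {0..<12} 0"
        using ry[of 4] ry[of 0] yinj by (auto dest: inj_onD)
      show "restrict (\<lambda>i. \<omega> (k i)) {0..<12} 1 \<noteq> restrict (\<lambda>i. \<omega> (k i)) {0..<12} 2"
        using ry[of 1] ry[of 2] yinj by (auto dest: inj_onD)
    qed
    then show False using nb by simp
  qed
  have mc: "real (card T) ^ 3 < 4 * real (card L) ^ 5" by (rule main_comb[OF p Lg TI nk Tne])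
  have "(\<alpha> * real (card S) / root 3 4) powr (3/5) < real n0"
    by (rule final_ineq[OF pos _ _ _]) (use cT mc cL in \<open>simp_all add: T_def\<close>)
  then show ?thesis by (simp add: n0_def S_def)
qed


theorem theorem9:
  fixes p N :: nat and \<epsilon> \<alpha> :: real and D :: "(nat \<Rightarrow> nat) pmf"
  assumes "prime p" and "\<epsilon> > 0" and "0 < \<alpha>" and "\<alpha> \<le> 1"
    and "N > 0" and "real N = real p powr (1/12 - \<epsilon>)"
    and "kwise_uniform p N 12 D"
  shows "measure_pmf.prob D
           {\<omega>. real (gen_complexity p \<alpha> (\<omega> ` {0..<N}))
                 > (\<alpha> * real (card (\<omega> ` {0..<N})) / root 3 4) powr (3/5)}
         \<ge> 1 - 6 * real p powr (-12 * \<epsilon>)"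
proof -
  note p = assms(1) and ku = assms(7)
  have p0: "p > 0" using p prime_gt_0_nat by blast
  define Tg where "Tg = {\<omega>. real (gen_complexity p \<alpha> (\<omega> ` {0..<N}))
                 > (\<alpha> * real (card (\<omega> ` {0..<N})) / root 3 4) powr (3/5)}"
  define K where "K = {k \<in> PiE {0..<12} (\<lambda>_. {0..<N}). inj_on k {0..<(12::nat)}}"
  define E where "E k = {\<omega>. bad p (restrict (\<lambda>i. \<omega> (k i)) {0..<12})}" for k :: "nat \<Rightarrow> nat"
  define U where "U = (\<Union>k\<in>K. E k)"
  have finK: "finite K" unfolding K_def by (simp add: finite_PiE)
  have cardK: "card K \<le> N ^ 12"
  proof -
    have "card K \<le> card (PiE {0..<12::nat} (\<lambda>_. {0..<N}))"
      unfolding K_def by (rule card_mono) (auto simp: finite_PiE)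
    also have "\<dots> = N ^ 12" by (simp add: card_PiE)
    finally show ?thesis .
  qed
  have PU: "measure_pmf.prob D U \<le> real N ^ 12 * 4 / real p"
  proof -
    have "measure_pmf.prob D U \<le> (\<Sum>k\<in>K. measure_pmf.prob D (E k))"
      unfolding U_def by (rule measure_pmf.finite_measure_subadditive_finite[OF finK]) auto
    also have "\<dots> \<le> (\<Sum>k\<in>K. 4 / real p)"
      by (rule sum_mono) (use prob_bad_le[OF ku p] in \<open>auto simp: K_def E_def\<close>)
    also have "\<dots> = real (card K) * (4 / real p)" by simp
    also have "\<dots> \<le> real (N ^ 12) * (4 / real p)"
      by (rule mult_right_mono) (use cardK in \<open>simp_all only: of_nat_le_iff\<close>, simp)
    finally show ?thesis by simp
  qed
  have sub: "set_pmf D \<inter> - U \<subseteq> Tg"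
  proof
    fix \<omega> assume w: "\<omega> \<in> set_pmf D \<inter> - U"
    have lt: "\<forall>i<N. \<omega> i < p" using set_pmf_lt[OF ku _ p0] w by blast
    have good: "\<forall>k \<in> PiE {0..<12} (\<lambda>_. {0..<N}). inj_on k {0..<12} \<longrightarrow> \<not> bad p (restrict (\<lambda>i. \<omega> (k i)) {0..<12})"
      using w by (auto simp: U_def K_def E_def)
    show "\<omega> \<in> Tg" unfolding Tg_def using good_target[OF p assms(3,4,5) lt good] by simp
  qed
  have "1 - measure_pmf.prob D U = measure_pmf.prob D (- U)"
    using measure_pmf.prob_compl[of U D] by (simp add: Compl_eq_Diff_UNIV)
  also have "\<dots> = measure_pmf.prob D (- U \<inter> set_pmf D)"
    by (rule measure_Int_set_pmf[symmetric])
  also have "\<dots> \<le> measure_pmf.prob D Tg"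
    by (rule measure_pmf.finite_measure_mono) (use sub in auto)
  finally have A: "1 - measure_pmf.prob D U \<le> measure_pmf.prob D Tg" .
  have N12: "real N ^ 12 = real p * real p powr (-12 * \<epsilon>)"
  proof -
    have "real N ^ 12 = real p powr (real 12 * (1/12 - \<epsilon>))"
      using assms(6) p0 by (simp add: powr_power)
    also have "real 12 * (1/12 - \<epsilon>) = 1 + (-12 * \<epsilon>)" by simp
    also have "real p powr (1 + (-12 * \<epsilon>)) = real p * real p powr (-12 * \<epsilon>)"
      using p0 powr_add[of "real p" 1 "-12 * \<epsilon>"] by simp
    finally show ?thesis .
  qed
  have "real N ^ 12 * 4 / real p = 4 * real p powr (-12 * \<epsilon>)"
    using p0 by (simp add: N12)
  also have "\<dots> \<le> 6 * real p powr (-12 * \<epsilon>)" by simp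
  finally have B: "measure_pmf.prob D U \<le> 6 * real p powr (-12 * \<epsilon>)" using PU by linarith
  show ?thesis using A B unfolding Tg_def by linarith
qed

end
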